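(* Let $n\ge1$, $\sigma_1,\dots,\sigma_n\in G$, and $f=\sum_{\alpha\in W_n}a_\alpha\,\alpha(x_{1,\sigma_1}\cdots x_{n,\sigma_n})$ with $a_\alpha\in\mathbb{Q}$. Partition the monomials $\alpha(x_{1,\sigma_1}\cdots x_{n,\sigma_n})$ into equivalence classes and write $f=f_1+\cdots+f_t$, where each $f_i$ is the sum of the terms of $f$ whose monomials lie in one equivalence class. Then $f$ is a graded $*$-identity of $M_k(\mathbb{C})$ if and only if each $f_i$ is a graded $*$-identity, and a given $f_i$ is a graded $*$-identity if and only if the sum of its coefficients is zero.
   Context: Let $G=\{g_1=e,\dots,g_k\}$ be a finite group of order $k$. Index rows/columns of $k\times k$ matrices by $G$, let $E_{a,b}$ be matrix units, $P_g=\sum_{h\in G}E_{h,hg}$, and give $M_k(\mathbb{C})$ the $G$-crossed-product grading $M_k(\mathbb{C})_g=\{DP_g: D\text{ diagonal}\}$, with involution $*$ = transpose. $F=\mathbb{Q}\{x_{i,g},x^*_{i,g}: i\ge1,g\in G\}$ is the free algebra with involution $*$ exchanging $x_{i,g}\leftrightarrow x^*_{i,g}$ (anti-automorphism). A graded $*$-identity is an $f\in F$ vanishing under every substitution $x_{i,g}\mapsto A_{i,g}\in M_k(\mathbb{C})_g$, $x^*_{i,g}\mapsto A_{i,g}^T$. $W_n=S_n\times\{\pm1\}^n$ acts on monomials: for $\alpha=(\pi,\gamma)$ and $m=x_{i_1,\sigma_{i_1}}^{\epsilon_{i_1}}\cdots x_{i_n,\sigma_{i_n}}^{\epsilon_{i_n}}$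 ($\{i_1,\dots,i_n\}=\{1,\dots,n\}$, $\epsilon_j\in\{\text{nothing},*\}$), $\alpha(m)=x_{\pi(i_1),\sigma_{\pi(i_1)}}^{\delta_{\pi(i_1)}}\cdots x_{\pi(i_n),\sigma_{\pi(i_n)}}^{\delta_{\pi(i_n)}}$ with $\delta_j=\epsilon_j$ if $\gamma_j=1$ and $\delta_j$ the opposite choice if $\gamma_j=-1$. A strongly multilinear monomial of degree $n$ is $m=x_{j_1,h_1}^{\epsilon_1}\cdots x_{j_n,h_n}^{\epsilon_n}$ with $(j_1,\dots,j_n)$ a permutation of $(1,\dots,n)$, $h_r\in G$, $\epsilon_r\in\{\text{nothing},*\}$. Put $\tau_r=h_r$ if $\epsilon_r$ is nothing and $\tau_r=h_r^{-1}$ if $\epsilon_r=*$. The weight of $m$ is $w(m)=\tau_1\tau_2\cdots\tau_n$. For the variable index $i=j_r$, its start vertex is $s_m(i)=\tau_1\cdots\tau_{r-1}$ if $\epsilon_r$ is nothing and $s_m(i)=\tau_1\cdots\tau_{r-1}h_r^{-1}$ if $\epsilon_r=*$. An element $\alpha\in W_n$ is a path transformation of $m$ if (1) $w(\alpha(m))=w(m)$ and (2) $s_{\alpha(m)}(i)=s_m(i)$ for every $i\in\{1,\dots,n\}$. Two strongly multilinear monomials $m,r$ are equivalent if $r=\alpha(m)$ for some path transformation $\alpha$ of $m$ (this is an equivalence relation). *)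

theory Defs
  imports "HOL-Algebra.Group" "HOL-Combinatorics.Permutations" Complex_Main
begin

text \<open>Monomials in the free algebra with involution: a letter (i, g, s) is
  x_{i,g} if s = False and x^*_{i,g} if s = True.\<close>
type_synonym 'a letter = "nat \<times> 'a \<times> bool"
type_synonym 'a monomial = "'a letter list"

text \<open>Rational polynomials: coefficient functions on monomials (finite support).\<close>
type_synonym 'a fpoly = "'a monomial \<Rightarrow> rat"

text \<open>k x k complex matrices with rows/columns indexed by the group G.\<close>
type_synonym 'a gmat = "'a \<Rightarrow> 'a \<Rightarrow> complex"

definition gmul :: "('a, 'b) monoid_scheme \<Rightarrow> 'a gmat \<Rightarrow> 'a gmat \<Rightarrow> 'a gmat" where
  "gmul G A B = (\<lambda>a c. \<Sum>b\<in>carrier G. A a b * B b c)"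

definition gone :: "'a gmat" where
  "gone = (\<lambda>a b. if a = b then 1 else 0)"

definition gtransp :: "'a gmat \<Rightarrow> 'a gmat" where
  "gtransp A = (\<lambda>a b. A b a)"

text \<open>The matrix D P_g, D = diag(d), with P_g = sum_h E_{h,hg}.\<close>
definition diagP :: "('a, 'b) monoid_scheme \<Rightarrow> 'a \<Rightarrow> ('a \<Rightarrow> complex) \<Rightarrow> 'a gmat" where
  "diagP G g d = (\<lambda>a b. if a \<in> carrier G \<and> b \<in> carrier G \<and> b = a \<otimes>\<^bsub>G\<^esub> g then d a else 0)"

text \<open>The homogeneous component M_k(C)_g of the crossed-product grading.\<close>
definition graded_comp :: "('a, 'b) monoid_scheme \<Rightarrow> 'a \<Rightarrow> 'a gmat set" where
  "graded_comp G g = {A. \<exists>d. A = diagP G g d}"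

definition letter_mat :: "(nat \<Rightarrow> 'a \<Rightarrow> 'a gmat) \<Rightarrow> 'a letter \<Rightarrow> 'a gmat" where
  "letter_mat \<phi> l = (case l of (i, g, s) \<Rightarrow> if s then gtransp (\<phi> i g) else \<phi> i g)"

definition eval_mon :: "('a, 'b) monoid_scheme \<Rightarrow> (nat \<Rightarrow> 'a \<Rightarrow> 'a gmat) \<Rightarrow> 'a monomial \<Rightarrow> 'a gmat" where
  "eval_mon G \<phi> m = foldr (gmul G) (map (letter_mat \<phi>) m) gone"

definition graded_star_identity :: "('a, 'b) monoid_scheme \<Rightarrow> 'a fpoly \<Rightarrow> bool" where
  "graded_star_identity G P \<longleftrightarrow>
     (\<forall>\<phi>. (\<forall>i g. g \<in> carrier G \<longrightarrow> \<phi> i g \<in> graded_comp G g) \<longrightarrow>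
        (\<forall>a\<in>carrier G. \<forall>b\<in>carrier G.
           (\<Sum>m\<in>{m. P m \<noteq> 0}. of_rat (P m) * eval_mon G \<phi> m a b) = (0::complex)))"

text \<open>The hyperoctahedral group W_n = S_n x {+-1}^n; gamma j = True encodes gamma_j = -1.\<close>
definition Wn :: "nat \<Rightarrow> ((nat \<Rightarrow> nat) \<times> (nat \<Rightarrow> bool)) set" where
  "Wn n = {(\<pi>, \<gamma>). \<pi> permutes {1..n} \<and> (\<forall>j. j \<notin> {1..n} \<longrightarrow> \<gamma> j = False)}"

text \<open>Action of W_n on monomials: position r of alpha(m) carries variable pi(i_r),
  with the grade of that variable in m and its star status flipped iff gamma = -1.\<close>
definition act :: "((nat \<Rightarrow> nat) \<times> (nat \<Rightarrow> bool)) \<Rightarrow> 'a monomial \<Rightarrow> 'a monomial" where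
  "act \<alpha> m = map (\<lambda>l. let j = fst \<alpha> (fst l); (h, e) = the (map_of m j)
                        in (j, h, e \<noteq> snd \<alpha> j)) m"

definition strongly_multilinear :: "('a, 'b) monoid_scheme \<Rightarrow> nat \<Rightarrow> 'a monomial \<Rightarrow> bool" where
  "strongly_multilinear G n m \<longleftrightarrow>
     length m = n \<and> distinct (map fst m) \<and> set (map fst m) = {1..n} \<and>
     (\<forall>l\<in>set m. fst (snd l) \<in> carrier G)"

definition tau :: "('a, 'b) monoid_scheme \<Rightarrow> 'a letter \<Rightarrow> 'a" where
  "tau G l = (case l of (i, h, s) \<Rightarrow> if s then inv\<^bsub>G\<^esub> h else h)"

definition gprod :: "('a, 'b) monoid_scheme \<Rightarrow> 'a list \<Rightarrow> 'a" where
  "gprod G xs = foldr (\<lambda>x y. x \<otimes>\<^bsub>G\<^esub> y) xs \<one>\<^bsub>G\<^esub>"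

definition weight :: "('a, 'b) monoid_scheme \<Rightarrow> 'a monomial \<Rightarrow> 'a" where
  "weight G m = gprod G (map (tau G) m)"

definition start_vertex :: "('a, 'b) monoid_scheme \<Rightarrow> 'a monomial \<Rightarrow> nat \<Rightarrow> 'a" where
  "start_vertex G m i =
     (let r = (THE r. r < length m \<and> fst (m ! r) = i);
          (h, s) = snd (m ! r)
      in gprod G (map (tau G) (take r m)) \<otimes>\<^bsub>G\<^esub> (if s then inv\<^bsub>G\<^esub> h else \<one>\<^bsub>G\<^esub>))"

definition path_transformation :: "('a, 'b) monoid_scheme \<Rightarrow> ((nat \<Rightarrow> nat) \<times> (nat \<Rightarrow> bool)) \<Rightarrow> 'a monomial \<Rightarrow> bool" where
  "path_transformation G \<alpha> m \<longleftrightarrow>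
     \<alpha> \<in> Wn (length m) \<and> weight G (act \<alpha> m) = weight G m \<and>
     (\<forall>i\<in>{1..length m}. start_vertex G (act \<alpha> m) i = start_vertex G m i)"

definition equivalent_mon :: "('a, 'b) monoid_scheme \<Rightarrow> 'a monomial \<Rightarrow> 'a monomial \<Rightarrow> bool" where
  "equivalent_mon G m r \<longleftrightarrow>
     strongly_multilinear G (length m) m \<and> strongly_multilinear G (length r) r \<and>
     (\<exists>\<alpha>. path_transformation G \<alpha> m \<and> r = act \<alpha> m)"

definition base_mon :: "nat \<Rightarrow> (nat \<Rightarrow> 'a) \<Rightarrow> 'a monomial" where
  "base_mon n \<sigma> = map (\<lambda>i. (i, \<sigma> i, False)) [1..<n+1]"

definition poly_f :: "nat \<Rightarrow> (nat \<Rightarrow> 'a) \<Rightarrow> ((nat \<Rightarrow> nat) \<times> (nat \<Rightarrow> bool) \<Rightarrow> rat) \<Rightarrow> 'a fpoly" where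
  "poly_f n \<sigma> a = (\<lambda>m. \<Sum>\<alpha>\<in>{\<alpha>\<in>Wn n. act \<alpha> (base_mon n \<sigma>) = m}. a \<alpha>)"

definition class_part :: "('a, 'b) monoid_scheme \<Rightarrow> 'a monomial \<Rightarrow> 'a fpoly \<Rightarrow> 'a fpoly" where
  "class_part G m0 P = (\<lambda>m. if equivalent_mon G m0 m then P m else 0)"

end

theory Submission
  imports Defs
begin

fun pe :: "('a,'b) monoid_scheme \<Rightarrow> (nat \<Rightarrow> 'a \<Rightarrow> 'a \<Rightarrow> complex) \<Rightarrow> 'a monomial \<Rightarrow> 'a \<Rightarrow> complex" where
  "pe G D [] a = 1"
| "pe G D ((i,h,s)#m) a = D i h (a \<otimes>\<^bsub>G\<^esub> (if s then inv\<^bsub>G\<^esub> h else \<one>\<^bsub>G\<^esub>)) * pe G D m (a \<otimes>\<^bsub>G\<^esub> tau G (i,h,s))"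

context group
begin

lemma gprod_closed: "set xs \<subseteq> carrier G \<Longrightarrow> gprod G xs \<in> carrier G"
  by (induction xs) (auto simp: gprod_def)

lemma tau_closed: "fst (snd l) \<in> carrier G \<Longrightarrow> tau G l \<in> carrier G"
  by (cases l) (auto simp: tau_def)

lemma weight_closed: "\<forall>l\<in>set m. fst (snd l) \<in> carrier G \<Longrightarrow> weight G m \<in> carrier G"
  unfolding weight_def by (rule gprod_closed) (auto intro: tau_closed)

lemma eval_cons:
  assumes fin: "finite (carrier G)" and h: "h \<in> carrier G" and phi: "\<phi> i h = diagP G h dd" and a: "a \<in> carrier G"
  shows "eval_mon G \<phi> ((i,h,s)#m) a b = dd (a \<otimes> (if s then inv h else \<one>)) * eval_mon G \<phi> m (a \<otimes> tau G (i,h,s)) b"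
proof -
  have e: "eval_mon G \<phi> ((i,h,s)#m) a b = (\<Sum>c\<in>carrier G. letter_mat \<phi> (i,h,s) a c * eval_mon G \<phi> m c b)"
    by (simp add: eval_mon_def gmul_def)
  define x where "x = a \<otimes> (if s then inv h else h)"
  have x: "x \<in> carrier G" using a h by (simp add: x_def)
  have "\<And>c. c \<in> carrier G \<Longrightarrow> letter_mat \<phi> (i,h,s) a c * eval_mon G \<phi> m c b
        = (if c = x then dd (a \<otimes> (if s then inv h else \<one>)) * eval_mon G \<phi> m c b else 0)"
  proof -
    fix c assume c: "c \<in> carrier G"
    have "(a = c \<otimes> h) = (c = a \<otimes> inv h)" using c a h
      by (metis inv_solve_right)
    then show "?thesis c" using c a h
      by (cases s) (auto simp: letter_mat_def gtransp_def diagP_def phi x_def)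
  qed
  then have "eval_mon G \<phi> ((i,h,s)#m) a b = (\<Sum>c\<in>carrier G. if c = x then dd (a \<otimes> (if s then inv h else \<one>)) * eval_mon G \<phi> m c b else 0)"
    unfolding e by (rule sum.cong[OF refl])
  also have "\<dots> = dd (a \<otimes> (if s then inv h else \<one>)) * eval_mon G \<phi> m x b"
    using fin x by (simp add: sum.delta)
  finally show ?thesis by (simp add: x_def tau_def)
qed

lemma eval_pe:
  assumes fin: "finite (carrier G)"
    and "\<forall>l\<in>set m. fst (snd l) \<in> carrier G \<and> \<phi> (fst l) (fst (snd l)) = diagP G (fst (snd l)) (D (fst l) (fst (snd l)))"
    and "a \<in> carrier G"
  shows "eval_mon G \<phi> m a b = (if b = a \<otimes> weight G m then pe G D m a else 0)"
  using assms(2,3)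
proof (induction m arbitrary: a)
  case Nil
  then show ?case by (simp add: eval_mon_def gone_def weight_def gprod_def)
next
  case (Cons l m)
  obtain i h s where l: "l = (i,h,s)" by (cases l)
  have h: "h \<in> carrier G" and phi: "\<phi> i h = diagP G h (D i h)" using Cons.prems l by auto
  have t: "tau G (i,h,s) \<in> carrier G" using h by (auto intro: tau_closed)
  have w: "weight G m \<in> carrier G" using Cons.prems by (auto intro: weight_closed)
  have "eval_mon G \<phi> (l#m) a b = D i h (a \<otimes> (if s then inv h else \<one>)) * eval_mon G \<phi> m (a \<otimes> tau G (i,h,s)) b"
    unfolding l by (rule eval_cons[where \<phi>=\<phi> and i=i and dd="D i h"]) (use fin h phi Cons.prems(2) in auto)
  also have "\<dots> = D i h (a \<otimes> (if s then inv h else \<one>)) * (if b = (a \<otimes> tau G (i,h,s)) \<otimes> weight G m then pe G D m (a \<otimes> tau G (i,h,s)) else 0)"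
    using Cons.IH Cons.prems t by auto
  also have "(a \<otimes> tau G (i,h,s)) \<otimes> weight G m = a \<otimes> weight G (l#m)"
    using t w Cons.prems l by (simp add: weight_def gprod_def m_assoc)
  finally show ?case by (simp add: l)
qed

lemma pe_prod:
  assumes "\<forall>l\<in>set m. fst (snd l) \<in> carrier G" and "a \<in> carrier G"
  shows "pe G D m a = (\<Prod>r<length m. D (fst (m!r)) (fst (snd (m!r)))
            (a \<otimes> (gprod G (map (tau G) (take r m)) \<otimes> (if snd (snd (m!r)) then inv (fst (snd (m!r))) else \<one>))))"
  using assms
proof (induction m arbitrary: a)
  case Nil
  then show ?case by simp
next
  case (Cons l m)
  obtain i h s where l: "l = (i,h,s)" by (cases l)
  have h: "h \<in> carrier G" using Cons.prems l by auto
  have t: "tau G (i,h,s) \<in> carrier G" using h by (auto intro: tau_closed)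
  have at: "a \<otimes> tau G (i,h,s) \<in> carrier G" using t Cons.prems by auto
  have IH: "pe G D m (a \<otimes> tau G (i,h,s)) = (\<Prod>r<length m. D (fst (m!r)) (fst (snd (m!r)))
            ((a \<otimes> tau G (i,h,s)) \<otimes> (gprod G (map (tau G) (take r m)) \<otimes> (if snd (snd (m!r)) then inv (fst (snd (m!r))) else \<one>))))"
    using Cons.IH Cons.prems at by auto
  have eq: "(a \<otimes> tau G (i,h,s)) \<otimes> (gprod G (map (tau G) (take r m)) \<otimes> (if snd (snd (m!r)) then inv (fst (snd (m!r))) else \<one>))
     = a \<otimes> (gprod G (map (tau G) (take (Suc r) (l#m))) \<otimes> (if snd (snd ((l#m)!Suc r)) then inv (fst (snd ((l#m)!Suc r))) else \<one>))"
    if r: "r < length m" for r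
  proof -
    have mr: "fst (snd (m!r)) \<in> carrier G" using Cons.prems r by auto
    have g: "gprod G (map (tau G) (take r m)) \<in> carrier G"
      using Cons.prems by (intro gprod_closed) (auto intro: tau_closed dest: in_set_takeD)
    have c: "(if snd (snd (m!r)) then inv (fst (snd (m!r))) else \<one>) \<in> carrier G" using mr by auto
    show ?thesis using g mr t Cons.prems(2) by (cases "snd (snd (m!r))") (simp_all add: l gprod_def m_assoc)
  qed
  define F where "F r = D (fst ((l#m)!r)) (fst (snd ((l#m)!r)))
            (a \<otimes> (gprod G (map (tau G) (take r (l#m))) \<otimes> (if snd (snd ((l#m)!r)) then inv (fst (snd ((l#m)!r))) else \<one>)))" for r
  have F0: "F 0 = D i h (a \<otimes> (if s then inv h else \<one>))" using h Cons.prems(2) by (simp add: F_def l gprod_def)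
  have FS: "F (Suc r) = D (fst (m!r)) (fst (snd (m!r)))
            ((a \<otimes> tau G (i,h,s)) \<otimes> (gprod G (map (tau G) (take r m)) \<otimes> (if snd (snd (m!r)) then inv (fst (snd (m!r))) else \<one>)))"
    if "r < length m" for r
    using eq[OF that] by (simp add: F_def)
  have "pe G D (l#m) a = F 0 * (\<Prod>r<length m. F (Suc r))"
    using IH FS F0 by (simp add: l)
  also have "\<dots> = (\<Prod>r<Suc (length m). F r)" by (simp only: prod.lessThan_Suc_shift)
  finally show ?case by (simp add: F_def)
qed


lemma sv_formula:
  assumes d: "distinct (map fst m)" and r: "r < length m"
  shows "start_vertex G m (fst (m!r)) = gprod G (map (tau G) (take r m)) \<otimes> (if snd(snd(m!r)) then inv (fst(snd(m!r))) else \<one>)"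
proof -
  have "(THE r'. r' < length m \<and> fst (m!r') = fst (m!r)) = r"
  proof (rule the_equality)
    show "r < length m \<and> fst (m ! r) = fst (m ! r)" using r by simp
    fix r' assume "r' < length m \<and> fst (m ! r') = fst (m ! r)"
    then show "r' = r" using d r nth_eq_iff_index_eq[OF d, of r' r] by simp
  qed
  then show ?thesis unfolding start_vertex_def Let_def by (simp split: prod.splits)
qed

end

definition mkm :: "nat \<Rightarrow> (nat \<Rightarrow> 'a) \<Rightarrow> (nat \<Rightarrow> nat) \<Rightarrow> (nat \<Rightarrow> bool) \<Rightarrow> 'a monomial" where
  "mkm n \<sigma> f s = map (\<lambda>i. (f i, \<sigma> (f i), s (f i))) [1..<n+1]"

lemma upt_set1: "set [1..<n+1] = {1..n}" by auto

lemma mkm_fst: "map fst (mkm n \<sigma> f s) = map f [1..<n+1]" by (simp add: mkm_def)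

lemma mkm_set_fst: "f permutes {1..n} \<Longrightarrow> set (map fst (mkm n \<sigma> f s)) = {1..n}"
  by (simp add: mkm_fst permutes_image atLeastLessThanSuc_atLeastAtMost del: upt_Suc)

lemma mkm_distinct: "f permutes {1..n} \<Longrightarrow> distinct (map fst (mkm n \<sigma> f s))"
  by (simp add: mkm_fst distinct_map permutes_inj_on)

lemma mkm_len: "length (mkm n \<sigma> f s) = n" by (simp add: mkm_def)

lemma mkm_grade: "l \<in> set (mkm n \<sigma> f s) \<Longrightarrow> fst (snd l) = \<sigma> (fst l)"
  by (auto simp: mkm_def)

lemma mkm_fst_mem: "f permutes {1..n} \<Longrightarrow> l \<in> set (mkm n \<sigma> f s) \<Longrightarrow> fst l \<in> {1..n}"
  using mkm_set_fst[of f n \<sigma> s] by auto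

lemma mkm_map_of:
  assumes "f permutes {1..n}" "j \<in> {1..n}"
  shows "map_of (mkm n \<sigma> f s) j = Some (\<sigma> j, s j)"
proof -
  have "mkm n \<sigma> f s = map (\<lambda>x. (x, (\<sigma> x, s x))) (map f [1..<n+1])" by (simp add: mkm_def)
  moreover have "map_of (map (\<lambda>x. (x, (\<sigma> x, s x))) (map f [1..<n+1])) = (Some \<circ> (\<lambda>x. (\<sigma> x, s x))) |` set (map f [1..<n+1])"
    by (rule map_of_map_restrict)
  ultimately have "map_of (mkm n \<sigma> f s) = (Some \<circ> (\<lambda>x. (\<sigma> x, s x))) |` set (map f [1..<n+1])"
    by simp
  moreover have "set (map f [1..<n+1]) = {1..n}" using assms by (simp add: permutes_image atLeastLessThanSuc_atLeastAtMost del: upt_Suc)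
  ultimately show ?thesis using assms by simp
qed

lemma act_mkm:
  assumes f: "f permutes {1..n}" and p: "\<pi> permutes {1..n}"
  shows "act (\<pi>,\<gamma>) (mkm n \<sigma> f s) = mkm n \<sigma> (\<pi> \<circ> f) (\<lambda>j. s j \<noteq> \<gamma> j)"
proof -
  have "\<And>i. i \<in> set [1..<n+1] \<Longrightarrow> \<pi> (f i) \<in> {1..n}"
    using f p by (metis atLeastLessThanSuc_atLeastAtMost permutes_in_image set_upt Suc_eq_plus1)
  then have "act (\<pi>,\<gamma>) (mkm n \<sigma> f s) = map (\<lambda>i. (\<pi> (f i), \<sigma> (\<pi> (f i)), s (\<pi> (f i)) \<noteq> \<gamma> (\<pi> (f i)))) [1..<n+1]"
    unfolding act_def
    apply (subst (2) mkm_def)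
    apply (simp only: map_map o_def)
    apply (rule map_cong[OF refl])
    apply (simp add: mkm_map_of[OF f] Let_def)
    done
  then show ?thesis by (simp add: mkm_def)
qed

lemma base_mkm: "base_mon n \<sigma> = mkm n \<sigma> id (\<lambda>_. False)"
  by (simp add: base_mon_def mkm_def)

lemma mb_mkm: "\<alpha> \<in> Wn n \<Longrightarrow> act \<alpha> (base_mon n \<sigma>) = mkm n \<sigma> (fst \<alpha>) (snd \<alpha>)"
  unfolding base_mkm
  by (cases \<alpha>) (simp add: Wn_def act_mkm permutes_id)

context group begin

lemma eval_mkm:
  assumes fin: "finite (carrier G)" and f: "f permutes {1..n}"
    and sig: "\<forall>i\<in>{1..n}. \<sigma> i \<in> carrier G"
    and phi: "\<forall>i\<in>{1..n}. \<phi> i (\<sigma> i) = diagP G (\<sigma> i) (D i (\<sigma> i))"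
    and a: "a \<in> carrier G"
  shows "eval_mon G \<phi> (mkm n \<sigma> f s) a b = (if b = a \<otimes> weight G (mkm n \<sigma> f s)
           then \<Prod>i\<in>{1..n}. D i (\<sigma> i) (a \<otimes> start_vertex G (mkm n \<sigma> f s) i) else 0)"
proof -
  let ?m = "mkm n \<sigma> f s"
  have gr: "\<forall>l\<in>set ?m. fst (snd l) \<in> carrier G \<and> \<phi> (fst l) (fst (snd l)) = diagP G (fst (snd l)) (D (fst l) (fst (snd l)))"
    using sig phi mkm_grade mkm_fst_mem[OF f] by metis
  have gr2: "\<forall>l\<in>set ?m. fst (snd l) \<in> carrier G" using gr by blast
  define H where "H i = D i (\<sigma> i) (a \<otimes> start_vertex G ?m i)" for i
  have "pe G D ?m a = (\<Prod>r<length ?m. H (map fst ?m ! r))"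
    unfolding pe_prod[OF gr2 a]
  proof (rule prod.cong[OF refl])
    fix r assume "r \<in> {..<length ?m}"
    then have r: "r < length ?m" by simp
    have "fst (snd (?m!r)) = \<sigma> (fst (?m!r))" using mkm_grade nth_mem[OF r] by blast
    then show "D (fst (?m!r)) (fst (snd (?m!r)))
            (a \<otimes> (gprod G (map (tau G) (take r ?m)) \<otimes> (if snd (snd (?m!r)) then inv (fst (snd (?m!r))) else \<one>)))
          = H (map fst ?m ! r)"
      using sv_formula[OF mkm_distinct[OF f] r] r by (simp add: H_def)
  qed
  also have "\<dots> = prod_list (map H (map fst ?m))"
    by (simp add: prod.list_conv_set_nth atLeast0LessThan)
  also have "\<dots> = prod H (set (map fst ?m))"
    by (rule prod.distinct_set_conv_list[symmetric, OF mkm_distinct[OF f]])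
  also have "\<dots> = prod H {1..n}" by (simp only: mkm_set_fst[OF f])
  finally show ?thesis using eval_pe[OF fin gr a, of b] by (simp add: H_def)
qed

end

lemma Wn_finite: "finite (Wn n)"
proof -
  have "Wn n \<subseteq> {\<pi>. \<pi> permutes {1..n}} \<times> ((\<lambda>S j. j \<in> S) ` Pow {1..n})"
  proof
    fix x assume x: "x \<in> Wn n"
    obtain \<pi> \<gamma> where xe: "x = (\<pi>, \<gamma>)" by (cases x)
    have "\<gamma> = (\<lambda>j. j \<in> {j. \<gamma> j})" by simp
    moreover have "{j. \<gamma> j} \<subseteq> {1..n}" using x xe by (auto simp: Wn_def)
    ultimately have "\<gamma> \<in> (\<lambda>S j. j \<in> S) ` Pow {1..n}" by blast
    then show "x \<in> {\<pi>. \<pi> permutes {1..n}} \<times> ((\<lambda>S j. j \<in> S) ` Pow {1..n})"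
      using x xe by (auto simp: Wn_def)
  qed
  moreover have "finite ({\<pi>. \<pi> permutes {1..n}} \<times> ((\<lambda>S j. j \<in> S) ` Pow {1..n}))"
    by (intro finite_cartesian_product finite_permutations finite_imageI) auto
  ultimately show ?thesis by (rule finite_subset)
qed

lemma prod_indicator:
  assumes "finite A"
  shows "(\<Prod>i\<in>A. if P i then (1::complex) else 0) = (if \<forall>i\<in>A. P i then 1 else 0)"
proof (cases "\<forall>i\<in>A. P i")
  case True
  then show ?thesis by simp
next
  case False
  then obtain i where "i \<in> A" "\<not> P i" by blast
  then have "(\<Prod>i\<in>A. if P i then (1::complex) else 0) = 0" by (intro prod_zero assms) auto
  then show ?thesis using False by simp
qed

locale gctx = group G for G :: "('a,'b) monoid_scheme" (structure) +
  fixes n :: nat and \<sigma> :: "nat \<Rightarrow> 'a"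
  assumes fin: "finite (carrier G)" and sig: "\<forall>i\<in>{1..n}. \<sigma> i \<in> carrier G"
begin

abbreviation mb where "mb \<alpha> \<equiv> act \<alpha> (base_mon n \<sigma>)"

definition key where "key \<alpha> = (weight G (mb \<alpha>), restrict (start_vertex G (mb \<alpha>)) {1..n})"

definition V where "V D k a b = (if b = a \<otimes>\<^bsub>G\<^esub> fst k then \<Prod>i\<in>{1..n}. D i (\<sigma> i) (a \<otimes>\<^bsub>G\<^esub> snd k i) else (0::complex))"

lemma Wn_perm: "\<alpha> \<in> Wn n \<Longrightarrow> fst \<alpha> permutes {1..n}"
  by (auto simp: Wn_def)

lemma mb_sm: "\<alpha> \<in> Wn n \<Longrightarrow> strongly_multilinear G n (mb \<alpha>)"
  unfolding mb_mkm strongly_multilinear_def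
  using mkm_len mkm_distinct[OF Wn_perm] mkm_set_fst[OF Wn_perm] mkm_grade mkm_fst_mem[OF Wn_perm] sig
  by metis

lemma mb_len: "\<alpha> \<in> Wn n \<Longrightarrow> length (mb \<alpha>) = n"
  by (simp add: mb_mkm mkm_len)

lemma mb_grade: "\<alpha> \<in> Wn n \<Longrightarrow> \<forall>l\<in>set (mb \<alpha>). fst (snd l) \<in> carrier G"
  using mb_sm by (simp add: strongly_multilinear_def)

lemma weight_mb: "\<alpha> \<in> Wn n \<Longrightarrow> weight G (mb \<alpha>) \<in> carrier G"
  using mb_grade weight_closed by blast

lemma sv_carrier:
  assumes "\<alpha> \<in> Wn n" "i \<in> {1..n}"
  shows "start_vertex G (mb \<alpha>) i \<in> carrier G"
proof -
  let ?m = "mb \<alpha>"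
  have sm: "strongly_multilinear G n ?m" using mb_sm assms by blast
  then have "i \<in> set (map fst ?m)" using assms by (simp add: strongly_multilinear_def)
  then obtain r where r: "r < length ?m" and i: "fst (?m ! r) = i"
    by (auto simp: in_set_conv_nth)
  have d: "distinct (map fst ?m)" using sm by (simp add: strongly_multilinear_def)
  have gr: "\<forall>l\<in>set ?m. fst (snd l) \<in> carrier G" using sm by (simp add: strongly_multilinear_def)
  have g: "gprod G (map (tau G) (take r ?m)) \<in> carrier G"
    using gr by (intro gprod_closed) (auto intro: tau_closed dest: in_set_takeD)
  have h: "fst (snd (?m!r)) \<in> carrier G" using gr r nth_mem by blast
  show ?thesis using sv_formula[OF d r] i g h by simp
qed

lemma EV:
  assumes "\<alpha> \<in> Wn n" and phi: "\<forall>i\<in>{1..n}. \<phi> i (\<sigma> i) = diagP G (\<sigma> i) (D i (\<sigma> i))"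
    and a: "a \<in> carrier G"
  shows "eval_mon G \<phi> (mb \<alpha>) a b = V D (key \<alpha>) a b"
proof -
  have e: "eval_mon G \<phi> (mb \<alpha>) a b = (if b = a \<otimes> weight G (mb \<alpha>)
           then \<Prod>i\<in>{1..n}. D i (\<sigma> i) (a \<otimes> start_vertex G (mb \<alpha>) i) else 0)"
    unfolding mb_mkm[OF assms(1)] by (rule eval_mkm[OF fin Wn_perm[OF assms(1)] sig, where \<phi>=\<phi> and D=D, OF phi a])
  show ?thesis unfolding e V_def key_def by (auto intro!: prod.cong)
qed

lemma Q:
  assumes a: "\<alpha> \<in> Wn n" and b: "\<beta> \<in> Wn n"
  shows "equivalent_mon G (mb \<beta>) (mb \<alpha>) \<longleftrightarrow> key \<alpha> = key \<beta>"
proof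
  assume "equivalent_mon G (mb \<beta>) (mb \<alpha>)"
  then obtain \<alpha>' where p: "path_transformation G \<alpha>' (mb \<beta>)" and e: "mb \<alpha> = act \<alpha>' (mb \<beta>)"
    by (auto simp: equivalent_mon_def)
  then show "key \<alpha> = key \<beta>" using mb_len[OF b]
    unfolding key_def path_transformation_def by (auto simp: restrict_def fun_eq_iff)
next
  assume k: "key \<alpha> = key \<beta>"
  obtain pa ga where ae: "\<alpha> = (pa, ga)" by (cases \<alpha>)
  obtain pb gb where be: "\<beta> = (pb, gb)" by (cases \<beta>)
  have pa: "pa permutes {1..n}" and pb: "pb permutes {1..n}" using a b ae be by (auto simp: Wn_def)
  define \<alpha>' where "\<alpha>' = (pa \<circ> inv_into UNIV pb, \<lambda>j. gb j \<noteq> ga j)"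
  have pp: "pa \<circ> inv_into UNIV pb permutes {1..n}" by (rule permutes_compose[OF permutes_inv[OF pb] pa])
  have mbb: "mb \<beta> = mkm n \<sigma> pb gb" using mb_mkm[OF b] be by simp
  have mba: "mb \<alpha> = mkm n \<sigma> pa ga" using mb_mkm[OF a] ae by simp
  have "act \<alpha>' (mb \<beta>) = mkm n \<sigma> (pa \<circ> inv_into UNIV pb \<circ> pb) (\<lambda>j. gb j \<noteq> (gb j \<noteq> ga j))"
    unfolding mbb \<alpha>'_def by (rule act_mkm[OF pb pp])
  also have "\<dots> = mb \<alpha>" unfolding mba
  proof -
    have "(\<lambda>j. gb j \<noteq> (gb j \<noteq> ga j)) = ga" by auto
    then show "mkm n \<sigma> (pa \<circ> inv_into UNIV pb \<circ> pb) (\<lambda>j. gb j \<noteq> (gb j \<noteq> ga j)) = mkm n \<sigma> pa ga"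
      by (simp add: comp_assoc permutes_inv_o(2)[OF pb])
  qed
  finally have act: "act \<alpha>' (mb \<beta>) = mb \<alpha>" .
  have W: "\<alpha>' \<in> Wn (length (mb \<beta>))"
    using a b ae be pp mb_len[OF b] by (auto simp: Wn_def \<alpha>'_def)
  have "path_transformation G \<alpha>' (mb \<beta>)"
    unfolding path_transformation_def act using W k mb_len[OF b]
    by (auto simp: key_def restrict_def fun_eq_iff split: if_splits)
  then show "equivalent_mon G (mb \<beta>) (mb \<alpha>)"
    unfolding equivalent_mon_def using mb_sm[OF a] mb_sm[OF b] mb_len[OF a] mb_len[OF b] act by metis
qed

lemma SUMP:
  "(\<Sum>m\<in>{m. poly_f n \<sigma> c m \<noteq> 0}. of_rat (poly_f n \<sigma> c m) * F m) = (\<Sum>\<alpha>\<in>Wn n. of_rat (c \<alpha>) * (F (mb \<alpha>) :: complex))"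
proof -
  let ?T = "mb ` Wn n"
  have fT: "finite ?T" using Wn_finite by simp
  have sub: "{m. poly_f n \<sigma> c m \<noteq> 0} \<subseteq> ?T"
  proof
    fix m assume "m \<in> {m. poly_f n \<sigma> c m \<noteq> 0}"
    then have nz: "poly_f n \<sigma> c m \<noteq> 0" by simp
    have "{\<alpha>\<in>Wn n. mb \<alpha> = m} \<noteq> {}"
    proof
      assume e: "{\<alpha>\<in>Wn n. mb \<alpha> = m} = {}"
      have "poly_f n \<sigma> c m = 0" unfolding poly_f_def e by simp
      then show False using nz by simp
    qed
    then obtain \<alpha> where "\<alpha> \<in> Wn n" "mb \<alpha> = m" by blast
    then show "m \<in> ?T" by (blast intro: rev_image_eqI)
  qed
  have "(\<Sum>m\<in>{m. poly_f n \<sigma> c m \<noteq> 0}. of_rat (poly_f n \<sigma> c m) * F m) = (\<Sum>m\<in>?T. of_rat (poly_f n \<sigma> c m) * F m)"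
    by (rule sum.mono_neutral_left[OF fT sub]) auto
  also have "\<dots> = (\<Sum>m\<in>?T. \<Sum>\<alpha>\<in>{\<alpha>\<in>Wn n. mb \<alpha> = m}. of_rat (c \<alpha>) * F (mb \<alpha>))"
  proof (rule sum.cong[OF refl])
    fix m assume "m \<in> ?T"
    have "of_rat (poly_f n \<sigma> c m) * F m = (\<Sum>\<alpha>\<in>{\<alpha>\<in>Wn n. mb \<alpha> = m}. of_rat (c \<alpha>) * F m)"
      by (simp add: poly_f_def of_rat_sum sum_distrib_right)
    also have "\<dots> = (\<Sum>\<alpha>\<in>{\<alpha>\<in>Wn n. mb \<alpha> = m}. of_rat (c \<alpha>) * F (mb \<alpha>))"
      by (rule sum.cong) auto
    finally show "of_rat (poly_f n \<sigma> c m) * F m = (\<Sum>\<alpha>\<in>{\<alpha>\<in>Wn n. mb \<alpha> = m}. of_rat (c \<alpha>) * F (mb \<alpha>))" .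
  qed
  also have "\<dots> = (\<Sum>\<alpha>\<in>Wn n. of_rat (c \<alpha>) * F (mb \<alpha>))"
    by (rule sum.image_gen[symmetric, OF Wn_finite])
  finally show ?thesis .
qed

lemma GI:
  "graded_star_identity G (poly_f n \<sigma> c) \<longleftrightarrow>
    (\<forall>D. \<forall>a\<in>carrier G. \<forall>b\<in>carrier G. (\<Sum>\<alpha>\<in>Wn n. of_rat (c \<alpha>) * V D (key \<alpha>) a b) = 0)"
proof
  assume I: "graded_star_identity G (poly_f n \<sigma> c)"
  show "\<forall>D. \<forall>a\<in>carrier G. \<forall>b\<in>carrier G. (\<Sum>\<alpha>\<in>Wn n. of_rat (c \<alpha>) * V D (key \<alpha>) a b) = 0"
  proof (intro allI ballI)
    fix D a b assume a: "a \<in> carrier G" and b: "b \<in> carrier G"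
    define \<phi> where "\<phi> i g = diagP G g (D i g)" for i :: nat and g
    have gr: "\<forall>i g. g \<in> carrier G \<longrightarrow> \<phi> i g \<in> graded_comp G g" by (auto simp: \<phi>_def graded_comp_def)
    have "(\<Sum>m\<in>{m. poly_f n \<sigma> c m \<noteq> 0}. of_rat (poly_f n \<sigma> c m) * eval_mon G \<phi> m a b) = 0"
      using I gr a b unfolding graded_star_identity_def by blast
    then have "(\<Sum>\<alpha>\<in>Wn n. of_rat (c \<alpha>) * eval_mon G \<phi> (mb \<alpha>) a b) = 0" by (simp only: SUMP)
    moreover have "\<And>\<alpha>. \<alpha> \<in> Wn n \<Longrightarrow> eval_mon G \<phi> (mb \<alpha>) a b = V D (key \<alpha>) a b"
      by (rule EV) (auto simp: \<phi>_def a)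
    ultimately show "(\<Sum>\<alpha>\<in>Wn n. of_rat (c \<alpha>) * V D (key \<alpha>) a b) = 0"
      by (metis (no_types, lifting) sum.cong)
  qed
next
  assume H: "\<forall>D. \<forall>a\<in>carrier G. \<forall>b\<in>carrier G. (\<Sum>\<alpha>\<in>Wn n. of_rat (c \<alpha>) * V D (key \<alpha>) a b) = 0"
  show "graded_star_identity G (poly_f n \<sigma> c)"
    unfolding graded_star_identity_def
  proof (intro allI impI ballI)
    fix \<phi> :: "nat \<Rightarrow> 'a \<Rightarrow> 'a gmat" and a b assume gr: "\<forall>i g. g \<in> carrier G \<longrightarrow> \<phi> i g \<in> graded_comp G g"
      and a: "a \<in> carrier G" and b: "b \<in> carrier G"
    define D where "D i g = (SOME d. \<phi> i g = diagP G g d)" for i :: nat and g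
    have phi: "\<forall>i\<in>{1..n}. \<phi> i (\<sigma> i) = diagP G (\<sigma> i) (D i (\<sigma> i))"
    proof
      fix i assume "i \<in> {1..n}"
      then have "\<exists>d. \<phi> i (\<sigma> i) = diagP G (\<sigma> i) d" using gr sig by (auto simp: graded_comp_def)
      then show "\<phi> i (\<sigma> i) = diagP G (\<sigma> i) (D i (\<sigma> i))" unfolding D_def by (rule someI_ex)
    qed
    have "(\<Sum>m\<in>{m. poly_f n \<sigma> c m \<noteq> 0}. of_rat (poly_f n \<sigma> c m) * eval_mon G \<phi> m a b)
        = (\<Sum>\<alpha>\<in>Wn n. of_rat (c \<alpha>) * eval_mon G \<phi> (mb \<alpha>) a b)" by (rule SUMP)
    also have "\<dots> = (\<Sum>\<alpha>\<in>Wn n. of_rat (c \<alpha>) * V D (key \<alpha>) a b)"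
      by (rule sum.cong[OF refl]) (simp add: EV[where \<phi>=\<phi> and D=D, OF _ phi a])
    also have "\<dots> = 0" using H a b by blast
    finally show "(\<Sum>m\<in>{m. poly_f n \<sigma> c m \<noteq> 0}. of_rat (poly_f n \<sigma> c m) * eval_mon G \<phi> m a b) = 0" .
  qed
qed

lemma ISO:
  assumes b: "\<beta> \<in> Wn n"
  shows "\<exists>D. \<forall>\<alpha>\<in>Wn n. V D (key \<alpha>) \<one>\<^bsub>G\<^esub> (weight G (mb \<beta>)) = (if key \<alpha> = key \<beta> then 1 else 0)"
proof -
  define D where "D i (g::'a) x = (if x = start_vertex G (mb \<beta>) i then (1::complex) else 0)" for i g x
  have "V D (key \<alpha>) \<one>\<^bsub>G\<^esub> (weight G (mb \<beta>)) = (if key \<alpha> = key \<beta> then 1 else 0)" if a: "\<alpha> \<in> Wn n" for \<alpha>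
  proof -
    have "V D (key \<alpha>) \<one>\<^bsub>G\<^esub> (weight G (mb \<beta>)) = (if weight G (mb \<beta>) = weight G (mb \<alpha>) then
           \<Prod>i\<in>{1..n}. (if start_vertex G (mb \<alpha>) i = start_vertex G (mb \<beta>) i then 1 else 0) else 0)"
      unfolding V_def key_def D_def using weight_mb[OF a] sv_carrier[OF a]
      by (auto intro!: prod.cong)
    also have "\<dots> = (if key \<alpha> = key \<beta> then 1 else 0)"
      by (simp add: prod_indicator key_def restrict_def fun_eq_iff) (metis atLeastAtMost_iff)
    finally show ?thesis .
  qed
  then show ?thesis by blast
qed

lemma class_eq:
  assumes b: "\<beta> \<in> Wn n"
  shows "class_part G (mb \<beta>) (poly_f n \<sigma> c) = poly_f n \<sigma> (\<lambda>\<alpha>. if key \<alpha> = key \<beta> then c \<alpha> else 0)"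
proof
  fix m
  show "class_part G (mb \<beta>) (poly_f n \<sigma> c) m = poly_f n \<sigma> (\<lambda>\<alpha>. if key \<alpha> = key \<beta> then c \<alpha> else 0) m"
  proof (cases "equivalent_mon G (mb \<beta>) m")
    case True
    then show ?thesis unfolding class_part_def poly_f_def using Q[OF _ b]
      by (auto intro!: sum.cong)
  next
    case False
    then show ?thesis unfolding class_part_def poly_f_def using Q[OF _ b]
      by (auto intro!: sum.neutral)
  qed
qed

lemma regroup:
  "(\<Sum>\<alpha>\<in>Wn n. of_rat (c \<alpha>) * V D (key \<alpha>) a b) =
   (\<Sum>k\<in>key ` Wn n. of_rat (\<Sum>\<alpha>\<in>{\<alpha>\<in>Wn n. key \<alpha> = k}. c \<alpha>) * V D k a b)"
proof -
  have "(\<Sum>\<alpha>\<in>Wn n. of_rat (c \<alpha>) * V D (key \<alpha>) a b) =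
     (\<Sum>k\<in>key ` Wn n. \<Sum>\<alpha>\<in>{\<alpha>\<in>Wn n. key \<alpha> = k}. of_rat (c \<alpha>) * V D (key \<alpha>) a b)"
    by (rule sum.image_gen[OF Wn_finite])
  also have "\<dots> = (\<Sum>k\<in>key ` Wn n. of_rat (\<Sum>\<alpha>\<in>{\<alpha>\<in>Wn n. key \<alpha> = k}. c \<alpha>) * V D k a b)"
    by (rule sum.cong[OF refl]) (simp add: of_rat_sum sum_distrib_right)
  finally show ?thesis .
qed

lemma filter_sum:
  "(\<Sum>\<alpha>\<in>Wn n. of_rat (if key \<alpha> = k then c \<alpha> else 0) * (X :: complex)) = of_rat (\<Sum>\<alpha>\<in>{\<alpha>\<in>Wn n. key \<alpha> = k}. c \<alpha>) * X"
  by (simp add: sum.inter_filter[OF Wn_finite] of_rat_sum sum_distrib_right if_distrib cong: if_cong)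

lemma filter_sum2:
  "(\<Sum>\<alpha>\<in>Wn n. of_rat (if key \<alpha> = k then c \<alpha> else 0) * V D (key \<alpha>) x y) = of_rat (\<Sum>\<alpha>\<in>{\<alpha>\<in>Wn n. key \<alpha> = k}. c \<alpha>) * V D k x y"
proof -
  have "(\<Sum>\<alpha>\<in>Wn n. of_rat (if key \<alpha> = k then c \<alpha> else 0) * V D (key \<alpha>) x y)
      = (\<Sum>\<alpha>\<in>Wn n. of_rat (if key \<alpha> = k then c \<alpha> else 0) * V D k x y)"
    by (rule sum.cong) auto
  then show ?thesis using filter_sum by simp
qed

end

theorem mainTheorem3:
  fixes G :: "('a, 'b) monoid_scheme" and n :: nat and \<sigma> :: "nat \<Rightarrow> 'a"
    and a :: "(nat \<Rightarrow> nat) \<times> (nat \<Rightarrow> bool) \<Rightarrow> rat"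
  assumes "group G" and "finite (carrier G)" and "n \<ge> 1"
    and "\<forall>i\<in>{1..n}. \<sigma> i \<in> carrier G"
  shows "(graded_star_identity G (poly_f n \<sigma> a) \<longleftrightarrow>
           (\<forall>\<beta>\<in>Wn n. graded_star_identity G
               (class_part G (act \<beta> (base_mon n \<sigma>)) (poly_f n \<sigma> a))))
       \<and> (\<forall>\<beta>\<in>Wn n.
           graded_star_identity G (class_part G (act \<beta> (base_mon n \<sigma>)) (poly_f n \<sigma> a)) \<longleftrightarrow>
           (\<Sum>\<alpha>\<in>{\<alpha>\<in>Wn n. equivalent_mon G (act \<beta> (base_mon n \<sigma>)) (act \<alpha> (base_mon n \<sigma>))}. a \<alpha>) = 0)"
proof -
  interpret gctx G n \<sigma>
    using assms by (simp add: gctx_def gctx_axioms_def)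
  define CS where "CS \<beta> = (\<Sum>\<alpha>\<in>{\<alpha>\<in>Wn n. key \<alpha> = key \<beta>}. a \<alpha>)" for \<beta>
  have setq: "{\<alpha>\<in>Wn n. equivalent_mon G (mb \<beta>) (mb \<alpha>)} = {\<alpha>\<in>Wn n. key \<alpha> = key \<beta>}"
    if "\<beta> \<in> Wn n" for \<beta> using Q[OF _ that] by auto
  have P2: "graded_star_identity G (class_part G (mb \<beta>) (poly_f n \<sigma> a)) \<longleftrightarrow> CS \<beta> = 0"
    if b: "\<beta> \<in> Wn n" for \<beta>
  proof -
    have "graded_star_identity G (class_part G (mb \<beta>) (poly_f n \<sigma> a)) \<longleftrightarrow>
      (\<forall>D. \<forall>x\<in>carrier G. \<forall>y\<in>carrier G. of_rat (CS \<beta>) * V D (key \<beta>) x y = 0)"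
      unfolding class_eq[OF b] GI CS_def filter_sum2 ..
    also have "\<dots> \<longleftrightarrow> CS \<beta> = 0"
    proof
      assume H: "\<forall>D. \<forall>x\<in>carrier G. \<forall>y\<in>carrier G. of_rat (CS \<beta>) * V D (key \<beta>) x y = 0"
      obtain D where D: "\<forall>\<alpha>\<in>Wn n. V D (key \<alpha>) \<one>\<^bsub>G\<^esub> (weight G (mb \<beta>)) = (if key \<alpha> = key \<beta> then 1 else 0)"
        using ISO[OF b] by blast
      have "of_rat (CS \<beta>) * V D (key \<beta>) \<one>\<^bsub>G\<^esub> (weight G (mb \<beta>)) = 0" using H weight_mb[OF b] by blast
      then show "CS \<beta> = 0" using D b by simp
    qed simp
    finally show ?thesis .
  qed
  have P1: "graded_star_identity G (poly_f n \<sigma> a) \<longleftrightarrow> (\<forall>\<beta>\<in>Wn n. CS \<beta> = 0)"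
    unfolding GI
  proof
    assume H: "\<forall>D. \<forall>x\<in>carrier G. \<forall>y\<in>carrier G. (\<Sum>\<alpha>\<in>Wn n. of_rat (a \<alpha>) * V D (key \<alpha>) x y) = 0"
    show "\<forall>\<beta>\<in>Wn n. CS \<beta> = 0"
    proof
      fix \<beta> assume b: "\<beta> \<in> Wn n"
      obtain D where D: "\<forall>\<alpha>\<in>Wn n. V D (key \<alpha>) \<one>\<^bsub>G\<^esub> (weight G (mb \<beta>)) = (if key \<alpha> = key \<beta> then 1 else 0)"
        using ISO[OF b] by blast
      have "0 = (\<Sum>\<alpha>\<in>Wn n. of_rat (a \<alpha>) * V D (key \<alpha>) \<one>\<^bsub>G\<^esub> (weight G (mb \<beta>)))"
        using H weight_mb[OF b] by auto
      also have "\<dots> = (\<Sum>\<alpha>\<in>Wn n. of_rat (if key \<alpha> = key \<beta> then a \<alpha> else 0) * (1::complex))"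
        by (rule sum.cong) (auto simp: D)
      also have "\<dots> = of_rat (CS \<beta>)" unfolding filter_sum CS_def by simp
      finally show "CS \<beta> = 0" by simp
    qed
  next
    assume H: "\<forall>\<beta>\<in>Wn n. CS \<beta> = 0"
    show "\<forall>D. \<forall>x\<in>carrier G. \<forall>y\<in>carrier G. (\<Sum>\<alpha>\<in>Wn n. of_rat (a \<alpha>) * V D (key \<alpha>) x y) = 0"
    proof (intro allI ballI)
      fix D x y
      show "(\<Sum>\<alpha>\<in>Wn n. of_rat (a \<alpha>) * V D (key \<alpha>) x y) = 0"
        unfolding regroup
      proof (rule sum.neutral, rule ballI)
        fix k assume "k \<in> key ` Wn n"
        then obtain \<beta> where b: "\<beta> \<in> Wn n" and k: "k = key \<beta>" by blast
        have "(\<Sum>\<alpha>\<in>{\<alpha>\<in>Wn n. key \<alpha> = k}. a \<alpha>) = 0" using H b k by (simp add: CS_def)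
        then show "of_rat (\<Sum>\<alpha>\<in>{\<alpha>\<in>Wn n. key \<alpha> = k}. a \<alpha>) * V D k x y = 0" by simp
      qed
    qed
  qed
  show ?thesis using P1 P2 setq by (simp add: CS_def)
qed

end
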